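(* Let $n\ge2$, $F\in\mathcal{F}_{n,n-1}$, $1\le k\le n$, and $a,b\in I_{F,k}$ with $a\ne b$. Then the function $\xi_{a,b}(\lambda)=\lambda_a-\lambda_b$ on $\mathbb{R}^{n+1}$ lies in the real linear span of the functions $\xi_{F,l}(\lambda)=\lambda_{F_l}-\lambda_{F_l^-}$, $k\le l\le n$.
   Context: Coordinates of $\mathbb{R}^{n+1}$ are indexed $\lambda=(\lambda_0,\dots,\lambda_n)$. The set $\mathcal{F}_{n,n-1}$ consists of sequences $F=(i_1,\sigma_1,\dots,i_{n-1},\sigma_{n-1})$ with $\sigma_l\in\{+,-\}$ built inductively: $I_{F,1}=\{0,\dots,n\}$; for each $1\le l\le n-1$, $i_l$ is an element of $I_{F,l}$ which is not its smallest element; writing $F_l:=i_l$ and $F_l^-$ for the largest element of $I_{F,l}$ smaller than $i_l$, set $I_{F,l+1}=I_{F,l}\setminus\{F_l\}$ if $\sigma_l=+$ and $I_{F,l+1}=I_{F,l}\setminus\{F_l^-\}$ if $\sigma_l=-$. The set $I_{F,n}$ has two elements; $F_n^-$ denotes the smaller and $F_n$ the larger. *)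

theory Defs
  imports Complex_Main
begin

text \<open>A sequence F = (i_1,sigma_1,...,i_{n-1},sigma_{n-1}) is a list of pairs (i_l, sigma_l),
  with sigma_l = True meaning + and False meaning -.  Entry l (1-based) is F ! (l-1).\<close>

type_synonym flagseq = "(nat \<times> bool) list"

definition pred_in :: "nat set \<Rightarrow> nat \<Rightarrow> nat" where
  "pred_in I i = Max {j \<in> I. j < i}"

text \<open>Iaux n F m = I_{F,m+1}.\<close>
fun Iaux :: "nat \<Rightarrow> flagseq \<Rightarrow> nat \<Rightarrow> nat set" where
  "Iaux n F 0 = {0..n}"
| "Iaux n F (Suc m) =
     (let I = Iaux n F m; i = fst (F ! m) in
      if snd (F ! m) then I - {i} else I - {pred_in I i})"

definition Iset :: "nat \<Rightarrow> flagseq \<Rightarrow> nat \<Rightarrow> nat set" where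
  "Iset n F l = Iaux n F (l - 1)"

definition valid_F :: "nat \<Rightarrow> flagseq \<Rightarrow> bool" where
  "valid_F n F \<longleftrightarrow> length F = n - 1 \<and>
     (\<forall>l\<in>{1..n-1}. fst (F ! (l-1)) \<in> Iset n F l \<and> fst (F ! (l-1)) \<noteq> Min (Iset n F l))"

definition Fup :: "nat \<Rightarrow> flagseq \<Rightarrow> nat \<Rightarrow> nat" where
  "Fup n F l = (if l \<le> n - 1 then fst (F ! (l-1)) else Max (Iset n F n))"

definition Fdown :: "nat \<Rightarrow> flagseq \<Rightarrow> nat \<Rightarrow> nat" where
  "Fdown n F l = (if l \<le> n - 1 then pred_in (Iset n F l) (fst (F ! (l-1)))
                  else Min (Iset n F n))"

text \<open>xi_{F,l}(lambda) = lambda_{F_l} - lambda_{F_l^-}; lambda in R^{n+1} represented as nat \<Rightarrow> real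
  (only coordinates 0..n are used).\<close>
definition xiF :: "nat \<Rightarrow> flagseq \<Rightarrow> nat \<Rightarrow> (nat \<Rightarrow> real) \<Rightarrow> real" where
  "xiF n F l x = x (Fup n F l) - x (Fdown n F l)"

end

theory Submission
  imports Defs
begin

definition inspan :: "nat \<Rightarrow> flagseq \<Rightarrow> nat \<Rightarrow> ((nat \<Rightarrow> real) \<Rightarrow> real) \<Rightarrow> bool" where
  "inspan n F k f \<longleftrightarrow> (\<exists>c :: nat \<Rightarrow> real. \<forall>x. f x = (\<Sum>l\<in>{k..n}. c l * xiF n F l x))"

lemma inspan_add:
  assumes "inspan n F k f" "inspan n F k g" shows "inspan n F k (\<lambda>x. f x + g x)"
proof -
  obtain c where c: "\<forall>x. f x = (\<Sum>l\<in>{k..n}. c l * xiF n F l x)" using assms(1) inspan_def by blast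
  obtain d where d: "\<forall>x. g x = (\<Sum>l\<in>{k..n}. d l * xiF n F l x)" using assms(2) inspan_def by blast
  show ?thesis unfolding inspan_def
    by (rule exI[of _ "\<lambda>l. c l + d l"]) (simp add: c d distrib_right sum.distrib)
qed

lemma inspan_neg:
  assumes "inspan n F k f" shows "inspan n F k (\<lambda>x. - f x)"
proof -
  obtain c where c: "\<forall>x. f x = (\<Sum>l\<in>{k..n}. c l * xiF n F l x)" using assms(1) inspan_def by blast
  show ?thesis unfolding inspan_def
    by (rule exI[of _ "\<lambda>l. - c l"]) (simp add: c sum_negf)
qed

lemma inspan_zero: "inspan n F k (\<lambda>x. 0)"
  unfolding inspan_def by (rule exI[of _ "\<lambda>l. 0"]) simp

lemma inspan_xi:
  assumes "k \<le> l" "l \<le> n" shows "inspan n F k (xiF n F l)"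
proof -
  define c :: "nat \<Rightarrow> real" where "c = (\<lambda>m. if m = l then 1 else 0)"
  have h: "\<forall>x. xiF n F l x = (\<Sum>m\<in>{k..n}. c m * xiF n F m x)"
  proof
    fix x
    have "(\<Sum>m\<in>{k..n}. c m * xiF n F m x)
        = (\<Sum>m\<in>{k..n}. if m = l then xiF n F m x else 0)" by (rule sum.cong) (auto simp: c_def)
    also have "\<dots> = xiF n F l x" using assms by (simp add: sum.delta)
    finally show "xiF n F l x = (\<Sum>m\<in>{k..n}. c m * xiF n F m x)" by simp
  qed
  show ?thesis unfolding inspan_def by (rule exI[of _ c]) (rule h)
qed

lemma inspan_mono:
  assumes "inspan n F (Suc k) f" shows "inspan n F k f"
proof -
  obtain c where c: "\<forall>x. f x = (\<Sum>l\<in>{Suc k..n}. c l * xiF n F l x)" using assms(1) inspan_def by blast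
  define d where "d = (\<lambda>l. if l = k then 0 else c l)"
  have h: "\<forall>x. f x = (\<Sum>l\<in>{k..n}. d l * xiF n F l x)"
  proof
    fix x
    show "f x = (\<Sum>l\<in>{k..n}. d l * xiF n F l x)"
    proof (cases "k \<le> n")
      case True
      have e: "{k..n} = insert k {Suc k..n}" using True by auto
      have s1: "(\<Sum>l\<in>{Suc k..n}. d l * xiF n F l x) = (\<Sum>l\<in>{Suc k..n}. c l * xiF n F l x)"
        by (rule sum.cong) (auto simp: d_def)
      have "(\<Sum>l\<in>{k..n}. d l * xiF n F l x) = d k * xiF n F k x + (\<Sum>l\<in>{Suc k..n}. d l * xiF n F l x)"
        unfolding e by (rule sum.insert) auto
      then show ?thesis using c s1 by (simp add: d_def)
    next
      case False
      then have "{Suc k..n} = {}" "{k..n} = {}" by auto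
      then show ?thesis using c by simp
    qed
  qed
  show ?thesis unfolding inspan_def by (rule exI[of _ d]) (rule h)
qed

lemma Iaux_sub: "Iaux n F m \<subseteq> {0..n}"
  by (induction m) (auto simp: Let_def)

lemma finite_Iaux: "finite (Iaux n F m)"
  by (rule finite_subset[OF Iaux_sub]) simp

lemma step_facts:
  assumes "valid_F n F" "m < n - 1"
  shows "fst (F!m) \<in> Iaux n F m \<and> pred_in (Iaux n F m) (fst (F!m)) \<in> Iaux n F m
         \<and> pred_in (Iaux n F m) (fst (F!m)) < fst (F!m)"
proof -
  let ?I = "Iaux n F m" and ?i = "fst (F!m)"
  have l: "Suc m \<in> {1..n-1}" using assms(2) by auto
  have h: "?i \<in> ?I" "?i \<noteq> Min ?I"
    using assms(1) l unfolding valid_F_def Iset_def by fastforce+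
  have fin: "finite ?I" by (rule finite_Iaux)
  have "Min ?I \<le> ?i" using h fin by simp
  then have "Min ?I < ?i" using h by simp
  moreover have "Min ?I \<in> ?I" using h fin Min_in by blast
  ultimately have ne: "{j \<in> ?I. j < ?i} \<noteq> {}" by blast
  have fin2: "finite {j \<in> ?I. j < ?i}" using fin by simp
  have "pred_in ?I ?i \<in> {j \<in> ?I. j < ?i}"
    unfolding pred_in_def using Max_in[OF fin2 ne] .
  then show ?thesis using h by simp
qed

lemma Iaux_Suc_eq: "Iaux n F (Suc m) = Iaux n F m - {if snd (F!m) then fst (F!m) else pred_in (Iaux n F m) (fst (F!m))}"
  unfolding Iaux.simps(2) Let_def by (cases "snd (F!m)") simp_all

lemma card_Iaux:
  assumes "valid_F n F" "m \<le> n - 1"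
  shows "card (Iaux n F m) = n + 1 - m"
  using assms(2)
proof (induction m)
  case 0
  then show ?case by simp
next
  case (Suc m)
  have m: "m < n - 1" using Suc.prems by simp
  note sf = step_facts[OF assms(1) m]
  have IH: "card (Iaux n F m) = n + 1 - m" using Suc by simp
  let ?r = "if snd (F!m) then fst (F!m) else pred_in (Iaux n F m) (fst (F!m))"
  have r: "?r \<in> Iaux n F m" using sf by simp
  have "card (Iaux n F (Suc m)) = card (Iaux n F m) - 1"
    unfolding Iaux_Suc_eq using card_Diff_singleton[OF r] .
  then show ?case using IH m by simp
qed

lemma main:
  assumes "valid_F n F" "n \<ge> 2" "j < n"
  shows "\<forall>a\<in>Iset n F (n - j). \<forall>b\<in>Iset n F (n - j). inspan n F (n - j) (\<lambda>x. x a - x b)"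
  using assms(3)
proof (induction j)
  case 0
  have c: "card (Iset n F n) = 2" using card_Iaux[OF assms(1), of "n-1"] assms(2)
    unfolding Iset_def by simp
  show ?case
  proof (intro ballI)
    fix a b assume a: "a \<in> Iset n F (n - 0)" and b: "b \<in> Iset n F (n - 0)"
    show "inspan n F (n - 0) (\<lambda>x. x a - x b)"
    proof (cases "a = b")
      case True then show ?thesis using inspan_zero by simp
    next
      case False
      have fin: "finite (Iset n F n)" unfolding Iset_def by (rule finite_Iaux)
      have eq: "Iset n F n = {a, b}"
      proof -
        have sub: "{a,b} \<subseteq> Iset n F n" using a b by simp
        have "card {a,b} = card (Iset n F n)" using False c by simp
        then show ?thesis using card_subset_eq[OF fin sub] by simp
      qed
      have xi: "\<forall>x. xiF n F n x = x (max a b) - x (min a b)"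
      proof -
        have nn: "\<not> n \<le> n - 1" using assms(2) by simp
        have u0: "Fup n F n = Max (Iset n F n)" using nn unfolding Fup_def by (simp only: if_False)
        have d0: "Fdown n F n = Min (Iset n F n)" using nn unfolding Fdown_def by (simp only: if_False)
        have mx: "Max {a,b} = max a b" "Min {a,b} = min a b" by simp_all
        have u: "Fup n F n = max a b" using u0 eq mx by simp
        have d: "Fdown n F n = min a b" using d0 eq mx by simp
        show ?thesis by (simp add: xiF_def u d)
      qed
      have sp: "inspan n F n (xiF n F n)" using inspan_xi[of n n n F] by simp
      show ?thesis
      proof (cases "a < b")
        case True
        have "(\<lambda>x. x a - x b) = (\<lambda>x. - xiF n F n x)" using xi True by (auto simp: max_def min_def)
        then show ?thesis using inspan_neg[OF sp] by simp
      next
        case False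
        then have "(\<lambda>x. x a - x b) = xiF n F n" using xi \<open>a \<noteq> b\<close> by (auto simp: max_def min_def)
        then show ?thesis using sp by simp
      qed
    qed
  qed
next
  case (Suc j)
  define k where "k = n - Suc j"
  have k1: "1 \<le> k" "k \<le> n - 1" using Suc.prems unfolding k_def by auto
  have kk: "n - j = Suc k" using Suc.prems unfolding k_def by auto
  have IH: "\<forall>a\<in>Iset n F (Suc k). \<forall>b\<in>Iset n F (Suc k). inspan n F k (\<lambda>x. x a - x b)"
    using Suc.IH Suc.prems kk inspan_mono by auto
  define m where "m = k - 1"
  have mk: "k = Suc m" "m < n - 1" using k1 unfolding m_def by auto
  let ?I = "Iaux n F m" and ?i = "fst (F!m)"
  define p where "p = pred_in ?I ?i"
  note sf = step_facts[OF assms(1) mk(2)]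
  have Ik: "Iset n F k = ?I" using mk unfolding Iset_def by simp
  have xi: "xiF n F k = (\<lambda>x. x ?i - x p)"
    using k1 mk unfolding xiF_def Fup_def Fdown_def p_def Iset_def by auto
  have sp: "inspan n F k (\<lambda>x. x ?i - x p)" using inspan_xi[of k k n F] k1 xi by simp
  have spn: "inspan n F k (\<lambda>x. x p - x ?i)" using inspan_neg[OF sp] by simp
  define r where "r = (if snd (F!m) then ?i else p)"
  define s where "s = (if snd (F!m) then p else ?i)"
  have I1: "Iset n F (Suc k) = ?I - {r}"
    using mk unfolding Iset_def r_def p_def by (simp add: Let_def)
  have rs: "r \<in> ?I" "s \<in> ?I" "r \<noteq> s" using sf unfolding r_def s_def p_def by auto
  have srs: "inspan n F k (\<lambda>x. x r - x s)" "inspan n F k (\<lambda>x. x s - x r)"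
    using sp spn unfolding r_def s_def by auto
  have sI1: "s \<in> Iset n F (Suc k)" using I1 rs by auto
  have gen: "inspan n F k (\<lambda>x. x a - x b)" if a: "a \<in> ?I" and b: "b \<in> ?I" for a b
  proof (cases "a = b")
    case True then show ?thesis using inspan_zero by simp
  next
    case False
    show ?thesis
    proof (cases "a = r")
      case ar: True
      have bI: "b \<in> Iset n F (Suc k)" using I1 b False ar by auto
      have "inspan n F k (\<lambda>x. (x r - x s) + (x s - x b))"
        using inspan_add[OF srs(1)] IH sI1 bI by blast
      then show ?thesis using ar by simp
    next
      case anr: False
      have aI: "a \<in> Iset n F (Suc k)" using I1 a anr by auto
      show ?thesis
      proof (cases "b = r")
        case True
        have "inspan n F k (\<lambda>x. (x a - x s) + (x s - x r))"
          using inspan_add[OF _ srs(2)] IH sI1 aI by blast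
        then show ?thesis using True by simp
      next
        case False
        have bI: "b \<in> Iset n F (Suc k)" using I1 b False by auto
        then show ?thesis using IH aI by blast
      qed
    qed
  qed
  show ?case using gen Ik k_def by simp
qed

theorem lemma5p8:
  fixes n k a b :: nat and F :: flagseq
  assumes "n \<ge> 2" and "valid_F n F" and "1 \<le> k" and "k \<le> n"
    and "a \<in> Iset n F k" and "b \<in> Iset n F k" and "a \<noteq> b"
  shows "\<exists>c :: nat \<Rightarrow> real. \<forall>x :: nat \<Rightarrow> real.
           x a - x b = (\<Sum>l\<in>{k..n}. c l * xiF n F l x)"
proof -
  have j: "n - k < n" "n - (n - k) = k" using assms(3,4) by auto
  have "inspan n F k (\<lambda>x. x a - x b)"
    using main[OF assms(2,1) j(1)] j(2) assms(5,6) by simp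
  then show ?thesis unfolding inspan_def by simp
qed

end
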